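(* Let $q>0$, $x\ge0$, $0<y<1$, and $p>1$. Define $$c_{p,q}=\frac{p+q-1}{p}\,y\,\frac{M(p+q,p+1,xy/2)}{M(p+q-1,p,xy/2)}.$$ Then both $y_k=B_{k,q}(x,y)$ and $y_k=\bar B_{k,q}(x,y)$ satisfy $$y_{p+1}-(1+c_{p,q})\,y_p+c_{p,q}\,y_{p-1}=0 .$$
   Context: For $p,q>0$ and $0\le y\le 1$, $I_y(p,q)=\frac{1}{B(p,q)}\int_0^y t^{p-1}(1-t)^{q-1}\,dt$ is the regularized incomplete beta function, with $B(p,q)=\Gamma(p)\Gamma(q)/\Gamma(p+q)$. The cumulative noncentral beta distribution is $B_{p,q}(x,y)=e^{-x/2}\sum_{j=0}^\infty \frac{1}{j!}\left(\frac x2\right)^j I_y(p+j,q)$ for $x\ge0$, and its complement is $\bar B_{p,q}(x,y)=1-B_{p,q}(x,y)$. $M(a,b,z)=\sum_{n\ge0}\frac{(a)_n}{(b)_n}\frac{z^n}{n!}$ is Kummer's confluent hypergeometric function, and $(a)_n$ is the Pochhammer symbol. *)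

theory Defs
  imports "HOL-Analysis.Analysis"
begin

text \<open>Regularized incomplete beta function I_y(p,q) (Henstock-Kurzweil integral; the
  integrand is absolutely integrable on [0,y] for p,q>0 and 0 \<le> y \<le> 1).\<close>
definition inc_beta :: "real \<Rightarrow> real \<Rightarrow> real \<Rightarrow> real" where
  "inc_beta y p q =
     integral {0..y} (\<lambda>t. t powr (p - 1) * (1 - t) powr (q - 1)) / Beta p q"

definition nc_beta :: "real \<Rightarrow> real \<Rightarrow> real \<Rightarrow> real \<Rightarrow> real" where
  "nc_beta p q x y =
     exp (- x / 2) * (\<Sum>j. (1 / fact j) * (x / 2) ^ j * inc_beta y (p + real j) q)"

definition nc_beta_compl :: "real \<Rightarrow> real \<Rightarrow> real \<Rightarrow> real \<Rightarrow> real" where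
  "nc_beta_compl p q x y = 1 - nc_beta p q x y"

definition kummerM :: "real \<Rightarrow> real \<Rightarrow> real \<Rightarrow> real" where
  "kummerM a b z = (\<Sum>n. pochhammer a n / pochhammer b n * z ^ n / fact n)"

end

theory Submission imports Defs begin

lemma Beta_pos: "a > 0 \<Longrightarrow> b > 0 \<Longrightarrow> Beta a (b::real) > 0"
  by (simp add: Beta_def)

lemma Beta_succ: "a > 0 \<Longrightarrow> b > 0 \<Longrightarrow> Beta (a+1) (b::real) = a / (a+b) * Beta a b"
proof -
  assume "a > 0" "b > 0"
  have "a \<notin> \<int>\<^sub>\<le>\<^sub>0" using \<open>a>0\<close> by (auto elim!: nonpos_Ints_cases)
  from Beta_plus1_left[OF this, of b] \<open>a>0\<close> \<open>b>0\<close> show ?thesis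
    by (simp add: field_simps)
qed

lemma inc_step:
  fixes p q y :: real
  assumes p: "p > 0" and q: "q > 0" and y0: "0 < y" and y1: "y < 1"
  shows "(\<lambda>t. t powr (p-1) * (1-t) powr (q-1)) integrable_on {0..y}"
    and "inc_beta y p q - inc_beta y (p+1) q = y powr p * (1-y) powr q / (p * Beta p q)"
proof -
  define f where "f = (\<lambda>t::real. t powr (p-1) * (1-t) powr (q-1))"
  define g where "g = (\<lambda>t::real. t powr p * (1-t) powr (q-1))"
  define F where "F = (\<lambda>t::real. t powr p * (1-t) powr q / p)"
  define k where "k = (p+q)/p"
  have der: "(F has_vector_derivative (f t - k * g t)) (at t)" if t: "t \<in> {0<..<y}" for t
  proof -
    from t y1 have t0: "t > 0" and t1: "1 - t > 0" by auto
    have "(F has_real_derivative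
        (p * t powr (p-1) * (1-t) powr q + t powr p * (q * (1-t) powr (q-1) * (-1))) / p) (at t)"
      unfolding F_def using t0 t1 p
      by (auto intro!: derivative_eq_intros)
    moreover have "(p * t powr (p-1) * (1-t) powr q + t powr p * (q * (1-t) powr (q-1) * (-1))) / p
        = f t - k * g t"
    proof -
      have e1: "t powr (p-1) = t powr p / t" using t0 by (simp add: powr_diff)
      have e2: "(1-t) powr (q-1) = (1-t) powr q / (1-t)" using t1 by (simp add: powr_diff)
      have tn: "t \<noteq> 0" "1 - t \<noteq> 0" "p \<noteq> 0" using t0 t1 p by auto
      have gen: "(p * (aa/t) * bb + aa * (q * (bb/ss) * (-1))) / p = (aa/t)*(bb/ss) - (p+q)/p*(aa*(bb/ss))"
        if "t \<noteq> 0" "ss \<noteq> 0" "p \<noteq> 0" "ss = 1 - t" for aa bb ss :: real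
      proof -
        have "(p * (aa/t) * bb + aa * (q * (bb/ss) * (-1))) / p = aa*bb*(p* ss - q* t)/(p* t* ss)"
          using that by (simp add: field_simps)
        also have "\<dots> = aa*bb*(p - (p+q)* t)/(p* t* ss)" unfolding that(4) by (simp add: algebra_simps)
        also have "\<dots> = (aa/t)*(bb/ss) - (p+q)/p*(aa*(bb/ss))"
          using that by (simp add: field_simps)
        finally show ?thesis .
      qed
      show ?thesis unfolding f_def g_def k_def e1 e2
        using gen[OF tn(1) tn(2) tn(3) refl] by simp
    qed
    ultimately show ?thesis by (simp add: has_real_derivative_iff_has_vector_derivative)
  qed
  have contF: "continuous_on {0..y} F"
    unfolding F_def using p y1
    by (intro continuous_intros continuous_on_powr') auto
  have gc: "continuous_on {0..y} g"
    unfolding g_def using p y1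
    by (intro continuous_intros continuous_on_powr') auto
  have I1: "((\<lambda>t. f t - k * g t) has_integral (F y - F 0)) {0..y}"
    using fundamental_theorem_of_calculus_interior[OF _ contF der] y0 by auto
  have gi: "g integrable_on {0..y}" using gc integrable_continuous_interval by blast
  have "(\<lambda>t. (f t - k * g t) + k * g t) integrable_on {0..y}"
    using I1 gi integrable_on_cmult_left[OF gi, of k] by (intro integrable_add) auto
  hence fi: "f integrable_on {0..y}" by simp
  thus "(\<lambda>t. t powr (p-1) * (1-t) powr (q-1)) integrable_on {0..y}" by (simp add: f_def)
  have "integral {0..y} f - k * integral {0..y} g = F y - F 0"
  proof -
    have "integral {0..y} (\<lambda>t. f t - k * g t) = F y - F 0" using I1 by (rule integral_unique)
    moreover have "integral {0..y} (\<lambda>t. f t - k * g t) = integral {0..y} f - integral {0..y} (\<lambda>t. k * g t)"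
      using fi integrable_on_cmult_left[OF gi, of k] by (intro integral_diff) auto
    moreover have "integral {0..y} (\<lambda>t. k * g t) = k * integral {0..y} g" by simp
    ultimately show ?thesis by simp
  qed
  hence eq: "integral {0..y} f - k * integral {0..y} g = y powr p * (1-y) powr q / p"
    using p by (simp add: F_def)
  have B: "Beta (p+1) q = p/(p+q) * Beta p q" using Beta_succ p q by blast
  have Bp: "Beta p q > 0" using Beta_pos p q by blast
  have "inc_beta y p q - inc_beta y (p+1) q = (integral {0..y} f - k * integral {0..y} g) / Beta p q"
    unfolding inc_beta_def f_def g_def k_def B using p q Bp by (simp add: field_simps)
  also have "\<dots> = y powr p * (1-y) powr q / (p * Beta p q)" using eq by simp
  finally show "inc_beta y p q - inc_beta y (p+1) q = y powr p * (1-y) powr q / (p * Beta p q)" .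
qed

lemma inc_nonneg:
  fixes p q y :: real
  assumes p: "p > 0" and q: "q > 0" and y0: "0 < y" and y1: "y < 1"
  shows "0 \<le> inc_beta y p q"
proof -
  have "0 \<le> integral {0..y} (\<lambda>t. t powr (p-1) * (1-t) powr (q-1))"
    by (rule Henstock_Kurzweil_Integration.integral_nonneg[OF inc_step(1)[OF assms]]) auto
  with Beta_pos[OF p q] show ?thesis unfolding inc_beta_def by simp
qed

lemma inc_bound:
  fixes p q y :: real
  assumes p: "p > 0" and q: "q > 0" and y0: "0 < y" and y1: "y < 1"
  shows "0 \<le> inc_beta y (p + real j) q \<and> inc_beta y (p + real j) q \<le> inc_beta y p q"
proof (induction j)
  case 0
  then show ?case using inc_nonneg[OF assms] by simp
next
  case (Suc j)
  have pj: "p + real j > 0" using p by simp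
  have e: "p + real (Suc j) = (p + real j) + 1" by simp
  have d: "inc_beta y (p + real j) q - inc_beta y (p + real (Suc j)) q
      = y powr (p + real j) * (1-y) powr q / ((p + real j) * Beta (p + real j) q)"
    unfolding e by (rule inc_step(2)[OF pj q y0 y1])
  have "0 \<le> y powr (p + real j) * (1-y) powr q / ((p + real j) * Beta (p + real j) q)"
    using Beta_pos[OF pj q] pj y1 by simp
  with d Suc have "inc_beta y (p + real (Suc j)) q \<le> inc_beta y p q" by linarith
  moreover have "0 \<le> inc_beta y (p + real (Suc j)) q"
    using inc_nonneg[of "p + real (Suc j)" q y] p q y0 y1 by simp
  ultimately show ?case by simp
qed

lemma nc_summable:
  fixes p q x y :: real
  assumes p: "p > 0" and q: "q > 0" and y0: "0 < y" and y1: "y < 1" and x: "x \<ge> 0"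
  shows "summable (\<lambda>j. (1 / fact j) * (x / 2) ^ j * inc_beta y (p + real j) q)"
proof (rule summable_comparison_test)
  show "summable (\<lambda>j. inc_beta y p q * (inverse (fact j) * (x/2)^j))"
    using summable_exp[of "x/2"] by simp
  show "\<exists>N. \<forall>n\<ge>N. norm (1 / fact n * (x / 2) ^ n * inc_beta y (p + real n) q)
      \<le> inc_beta y p q * (inverse (fact n) * (x/2)^n)"
  proof (intro exI allI impI)
    fix n :: nat
    have b: "0 \<le> inc_beta y (p + real n) q" "inc_beta y (p + real n) q \<le> inc_beta y p q"
      using inc_bound[OF assms(1-4)] by auto
    have nn: "0 \<le> 1 / fact n * (x / 2) ^ n" using x by simp
    have "norm (1 / fact n * (x / 2) ^ n * inc_beta y (p + real n) q)
        = 1 / fact n * (x / 2) ^ n * inc_beta y (p + real n) q"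
      using nn b x by simp
    also have "\<dots> \<le> 1 / fact n * (x / 2) ^ n * inc_beta y p q"
      using nn b by (intro mult_left_mono) auto
    finally show "norm (1 / fact n * (x / 2) ^ n * inc_beta y (p + real n) q)
      \<le> inc_beta y p q * (inverse (fact n) * (x/2)^n)" by (simp add: field_simps)
  qed
qed

lemma beta_poch:
  fixes r q :: real
  assumes r: "r > 0" and q: "q > 0"
  shows "(r + real j) * Beta (r + real j) q * pochhammer (r + q) j = r * Beta r q * pochhammer (r + 1) j"
proof (induction j)
  case 0 then show ?case by simp
next
  case (Suc j)
  have rj: "r + real j > 0" using r by simp
  have B: "Beta (r + real (Suc j)) q = (r + real j) / (r + real j + q) * Beta (r + real j) q"
    using Beta_succ[OF rj q] by (simp add: add_ac)
  have nz: "r + real j + q \<noteq> 0" using rj q by simp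
  have "(r + real (Suc j)) * Beta (r + real (Suc j)) q * pochhammer (r + q) (Suc j)
     = (r + real (Suc j)) * ((r + real j) * Beta (r + real j) q * pochhammer (r + q) j)
        * ((r + q + real j) / (r + real j + q))"
    unfolding B pochhammer_Suc by (simp add: field_simps)
  also have "\<dots> = (r + real (Suc j)) * (r * Beta r q * pochhammer (r + 1) j)"
    using Suc nz by (simp add: add_ac)
  also have "\<dots> = r * Beta r q * pochhammer (r + 1) (Suc j)"
    unfolding pochhammer_Suc by (simp add: algebra_simps)
  finally show ?case .
qed

lemma nc_diff:
  fixes r q x y :: real
  assumes r: "r > 0" and q: "q > 0" and y0: "0 < y" and y1: "y < 1" and x: "x \<ge> 0"
  defines "S \<equiv> \<lambda>r. (\<Sum>j. (1 / fact j) * (x / 2) ^ j * inc_beta y (r + real j) q)"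
  defines "K \<equiv> y powr r * (1-y) powr q / (r * Beta r q)"
  defines "m \<equiv> \<lambda>j. pochhammer (r + q) j / pochhammer (r + 1) j * (x * y / 2) ^ j / fact j"
  shows "m sums ((S r - S (r+1)) / K)" and "S r - S (r+1) = K * kummerM (r+q) (r+1) (x*y/2)"
proof -
  have r1: "r + 1 > 0" using r by simp
  have s1: "(\<lambda>j. (1 / fact j) * (x / 2) ^ j * inc_beta y (r + real j) q) sums S r"
    unfolding S_def using nc_summable[OF r q y0 y1 x] by (rule summable_sums)
  have s2: "(\<lambda>j. (1 / fact j) * (x / 2) ^ j * inc_beta y (r + 1 + real j) q) sums S (r+1)"
    unfolding S_def using nc_summable[OF r1 q y0 y1 x] by (rule summable_sums)
  have trm: "(1 / fact j) * (x / 2) ^ j * inc_beta y (r + real j) q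
       - (1 / fact j) * (x / 2) ^ j * inc_beta y (r + 1 + real j) q = K * m j" for j
  proof -
    have rj: "r + real j > 0" using r by simp
    have e: "r + 1 + real j = (r + real j) + 1" by simp
    have d: "inc_beta y (r + real j) q - inc_beta y (r + 1 + real j) q
      = y powr (r + real j) * (1-y) powr q / ((r + real j) * Beta (r + real j) q)"
      unfolding e by (rule inc_step(2)[OF rj q y0 y1])
    have bp: "(r + real j) * Beta (r + real j) q = r * Beta r q * pochhammer (r + 1) j / pochhammer (r + q) j"
      using beta_poch[OF r q, of j] pochhammer_pos[of "r+q" j] r q
      by (simp add: field_simps)
    have yp: "y powr (r + real j) = y powr r * y ^ j" using y0 by (simp add: powr_add powr_realpow)
    have pos: "pochhammer (r + 1) j > 0" "pochhammer (r + q) j > 0" "Beta r q > 0"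
      using pochhammer_pos[of "r+1" j] pochhammer_pos[of "r+q" j] Beta_pos[OF r q] r q by auto
    have "(1 / fact j) * (x / 2) ^ j * inc_beta y (r + real j) q
       - (1 / fact j) * (x / 2) ^ j * inc_beta y (r + 1 + real j) q
       = (1 / fact j) * (x / 2) ^ j * (inc_beta y (r + real j) q - inc_beta y (r + 1 + real j) q)"
      by (simp add: algebra_simps)
    also have "\<dots> = K * m j" unfolding d bp yp K_def m_def using pos r
      by (simp add: field_simps power_mult_distrib)
    finally show ?thesis .
  qed
  have "(\<lambda>j. K * m j) sums (S r - S (r+1))"
    using sums_diff[OF s1 s2] unfolding trm .
  hence "(\<lambda>j. (1/K) * (K * m j)) sums ((1/K) * (S r - S (r+1)))" by (rule sums_mult)
  moreover have "K \<noteq> 0" unfolding K_def using Beta_pos[OF r q] r y0 y1 by simp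
  ultimately show ms: "m sums ((S r - S (r+1)) / K)" by simp
  have "kummerM (r+q) (r+1) (x*y/2) = (S r - S (r+1)) / K"
    unfolding kummerM_def using ms[unfolded m_def] by (rule sums_unique[symmetric])
  with \<open>K \<noteq> 0\<close> show "S r - S (r+1) = K * kummerM (r+q) (r+1) (x*y/2)" by simp
qed


theorem mainTheorem5:
  fixes p q x y :: real
  assumes "q > 0" and "x \<ge> 0" and "0 < y" and "y < 1" and "p > 1"
  defines "c \<equiv> (p + q - 1) / p * y * kummerM (p + q) (p + 1) (x * y / 2)
                  / kummerM (p + q - 1) p (x * y / 2)"
  shows "nc_beta (p + 1) q x y - (1 + c) * nc_beta p q x y + c * nc_beta (p - 1) q x y = 0
       \<and> nc_beta_compl (p + 1) q x y - (1 + c) * nc_beta_compl p q x y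
           + c * nc_beta_compl (p - 1) q x y = 0"
proof -
  note q = assms(1) and x = assms(2) and y0 = assms(3) and y1 = assms(4) and p1 = assms(5)
  define S where "S \<equiv> \<lambda>r. (\<Sum>j. (1 / fact j) * (x / 2) ^ j * inc_beta y (r + real j) q)"
  define K where "K \<equiv> \<lambda>r. y powr r * (1-y) powr q / (r * Beta r q)"
  define M1 where "M1 = kummerM (p + q) (p + 1) (x * y / 2)"
  define M0 where "M0 = kummerM (p + q - 1) p (x * y / 2)"
  have p0: "p > 0" and pm: "p - 1 > 0" using p1 by auto
  have nc: "nc_beta r q x y = exp (- x / 2) * S r" for r unfolding nc_beta_def S_def by simp
  have D1: "S p - S (p+1) = K p * M1"
    unfolding S_def K_def M1_def by (rule nc_diff(2)[OF p0 q y0 y1 x])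
  have D0': "S (p-1) - S (p-1+1) = K (p-1) * kummerM (p-1+q) (p-1+1) (x*y/2)"
    unfolding S_def K_def by (rule nc_diff(2)[OF pm q y0 y1 x])
  have D0: "S (p-1) - S p = K (p-1) * M0"
    using D0' unfolding M0_def by (simp add: algebra_simps)
  have ms: "(\<lambda>j. pochhammer (p - 1 + q) j / pochhammer (p - 1 + 1) j * (x * y / 2) ^ j / fact j) sums
     ((S (p-1) - S (p-1+1)) / K (p-1))"
    unfolding S_def K_def by (rule nc_diff(1)[OF pm q y0 y1 x])
  have M0pos: "M0 > 0"
  proof -
    have sm: "summable (\<lambda>j. pochhammer (p - 1 + q) j / pochhammer (p - 1 + 1) j * (x * y / 2) ^ j / fact j)"
      using ms by (rule sums_summable)
    have "0 < (\<Sum>j. pochhammer (p - 1 + q) j / pochhammer (p - 1 + 1) j * (x * y / 2) ^ j / fact j)"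
    proof (rule suminf_pos2[OF sm, of 0])
      fix n
      show "0 \<le> pochhammer (p - 1 + q) n / pochhammer (p - 1 + 1) n * (x * y / 2) ^ n / fact n"
        using pochhammer_pos[of "p-1+q" n] pochhammer_pos[of "p-1+1" n] pm q x y0 by simp
    qed simp
    thus ?thesis unfolding M0_def kummerM_def by (simp add: algebra_simps)
  qed
  have KK: "K p = (p + q - 1) / p * y * K (p-1)"
  proof -
    have B: "Beta p q = (p-1)/(p-1+q) * Beta (p-1) q" using Beta_succ[OF pm q] by simp
    have yp: "y powr p = y powr (p-1) * y" using y0 powr_add[of y "p-1" 1] by simp
    have "Beta (p-1) q > 0" using Beta_pos[OF pm q] .
    then show ?thesis unfolding K_def B yp using pm p0 q
      by (simp add: field_simps)
  qed
  have c: "c = (p + q - 1) / p * y * M1 / M0" unfolding c_def M1_def M0_def by simp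
  have key: "c * (K (p-1) * M0) = K p * M1"
    unfolding c KK using M0pos p0 by (simp add: field_simps)
  have first: "nc_beta (p + 1) q x y - (1 + c) * nc_beta p q x y + c * nc_beta (p - 1) q x y = 0"
  proof -
    have "nc_beta (p + 1) q x y - (1 + c) * nc_beta p q x y + c * nc_beta (p - 1) q x y
       = exp (- x / 2) * (c * (S (p-1) - S p) - (S p - S (p+1)))"
      unfolding nc by (simp add: algebra_simps)
    also have "\<dots> = 0" unfolding D0 D1 key by simp
    finally show ?thesis .
  qed
  moreover have "nc_beta_compl (p + 1) q x y - (1 + c) * nc_beta_compl p q x y
           + c * nc_beta_compl (p - 1) q x y = 0"
    using first unfolding nc_beta_compl_def by (simp add: algebra_simps)
  ultimately show ?thesis by simp
qed

end
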